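(* Let $D\subseteq U$ be compact with diameter $\operatorname{diam}(D)=\max_{d,d'\in D}\rho(d,d')$, let $\epsilon\ge0$, $0\le\delta\le1$, and let $\{X_d:\Omega\to U\mid d\in D\}$ be a family of measurable maps such that $$\mathbb{P}(X_d\in A)\le e^\epsilon\,\mathbb{P}(X_{d'}\in A)+\delta$$ for all $d,d'\in D$ and all $A\in\mathcal{A}_U$. Then $$\mathcal{E}:=\sup_{d\in D}\mathbb{E}[\rho(X_d,d)]\ \ge\ (1-\delta)\,\frac{\operatorname{diam}(D)}{2(1+e^\epsilon)}.$$
   Context: $(U,\rho)$ is a metric space with Borel $\sigma$-algebra $\mathcal{A}_U$, and $(\Omega,\mathcal{F},\mathbb{P})$ is a probability space. $\rho(X_d,d)$ is a nonnegative random variable; its expectation may be $+\infty$. *)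

theory Defs
  imports "HOL-Probability.Probability"
begin

end

theory Submission
  imports Defs
begin

lemma nn_lower:
  assumes P: "prob_space M" and Xm: "X \<in> M \<rightarrow>\<^sub>M borel" and A: "A \<in> sets borel"
    and c: "c \<ge> 0"
    and h: "\<And>\<omega>. \<omega> \<in> space M \<Longrightarrow> X \<omega> \<in> A \<Longrightarrow> c \<le> f \<omega>"
  shows "ennreal (c * measure M {\<omega> \<in> space M. X \<omega> \<in> A}) \<le> (\<integral>\<^sup>+ \<omega>. ennreal (f \<omega>) \<partial>M)"
proof -
  let ?S = "{\<omega> \<in> space M. X \<omega> \<in> A}"
  have S: "?S \<in> sets M" using Xm A by (simp add: measurable_sets_Collect)
  interpret prob_space M by (rule P)
  have "ennreal (c * measure M ?S) = ennreal c * emeasure M ?S"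
    using c by (simp add: emeasure_eq_measure ennreal_mult)
  also have "\<dots> = (\<integral>\<^sup>+ \<omega>. ennreal c * indicator ?S \<omega> \<partial>M)"
    using S by (simp add: nn_integral_cmult_indicator)
  also have "\<dots> \<le> (\<integral>\<^sup>+ \<omega>. ennreal (f \<omega>) \<partial>M)"
    by (rule nn_integral_mono) (auto simp: indicator_def h ennreal_leI)
  finally show ?thesis .
qed

theorem mainTheorem11:
  fixes M :: "'w measure" and D :: "'a::metric_space set"
    and X :: "'a \<Rightarrow> 'w \<Rightarrow> 'a" and \<epsilon> \<delta> :: real
  assumes "prob_space M"
    and "compact D" and "D \<noteq> {}"
    and "\<epsilon> \<ge> 0" and "0 \<le> \<delta>" and "\<delta> \<le> 1"
    and "\<And>d. d \<in> D \<Longrightarrow> X d \<in> M \<rightarrow>\<^sub>M borel"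
    and "\<And>d d' A. d \<in> D \<Longrightarrow> d' \<in> D \<Longrightarrow> A \<in> sets borel \<Longrightarrow>
           measure M {\<omega> \<in> space M. X d \<omega> \<in> A}
             \<le> exp \<epsilon> * measure M {\<omega> \<in> space M. X d' \<omega> \<in> A} + \<delta>"
  shows "(SUP d\<in>D. \<integral>\<^sup>+ \<omega>. ennreal (dist (X d \<omega>) d) \<partial>M)
           \<ge> ennreal ((1 - \<delta>) * diameter D / (2 * (1 + exp \<epsilon>)))"
proof -
  interpret prob_space M by (rule assms(1))
  obtain a b where a: "a \<in> D" and b: "b \<in> D" and ab: "dist a b = diameter D"
    using diameter_compact_attained[OF assms(2,3)] by blast
  define \<Delta> where "\<Delta> = diameter D"
  have \<Delta>0: "\<Delta> \<ge> 0" unfolding \<Delta>_def using ab[symmetric] by simp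
  define B where "B = ball b (\<Delta>/2)"
  have Bb: "B \<in> sets borel" "- B \<in> sets borel" unfolding B_def by auto
  define S where "S = (SUP d\<in>D. \<integral>\<^sup>+ \<omega>. ennreal (dist (X d \<omega>) d) \<partial>M)"
  define p where "p = measure M {\<omega> \<in> space M. X a \<omega> \<in> B}"
  define q where "q = measure M {\<omega> \<in> space M. X b \<omega> \<in> B}"
  have pq: "q \<le> exp \<epsilon> * p + \<delta>" unfolding p_def q_def using assms(8)[OF b a Bb(1)] .
  have p0: "p \<ge> 0" unfolding p_def by simp
  have "ennreal (\<Delta>/2 * p) \<le> (\<integral>\<^sup>+ \<omega>. ennreal (dist (X a \<omega>) a) \<partial>M)"
    unfolding p_def
  proof (rule nn_lower[OF assms(1) assms(7)[OF a] Bb(1)])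
    show "0 \<le> \<Delta>/2" using \<Delta>0 by simp
    fix \<omega> assume "X a \<omega> \<in> B"
    hence "dist (X a \<omega>) b < \<Delta>/2" unfolding B_def by (simp add: dist_commute)
    moreover have "dist a b \<le> dist (X a \<omega>) a + dist (X a \<omega>) b" by (rule dist_triangle3)
    ultimately show "\<Delta>/2 \<le> dist (X a \<omega>) a" using ab \<Delta>_def by simp
  qed
  also have "\<dots> \<le> S" unfolding S_def using a by (rule SUP_upper)
  finally have h1: "ennreal (\<Delta>/2 * p) \<le> S" .
  have evB: "{\<omega> \<in> space M. X b \<omega> \<in> B} \<in> events"
    using assms(7)[OF b] Bb(1) by (simp add: measurable_sets_Collect)
  have cmp: "{\<omega> \<in> space M. X b \<omega> \<in> - B} = space M - {\<omega> \<in> space M. X b \<omega> \<in> B}" by auto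
  have "ennreal (\<Delta>/2 * (1 - q)) = ennreal (\<Delta>/2 * measure M {\<omega> \<in> space M. X b \<omega> \<in> - B})"
    unfolding cmp q_def using prob_compl[OF evB] by simp
  also have "\<dots> \<le> (\<integral>\<^sup>+ \<omega>. ennreal (dist (X b \<omega>) b) \<partial>M)"
  proof (rule nn_lower[OF assms(1) assms(7)[OF b] Bb(2)])
    show "0 \<le> \<Delta>/2" using \<Delta>0 by simp
    fix \<omega> assume "X b \<omega> \<in> - B"
    thus "\<Delta>/2 \<le> dist (X b \<omega>) b" unfolding B_def by (simp add: dist_commute)
  qed
  also have "\<dots> \<le> S" unfolding S_def using b by (rule SUP_upper)
  finally have h2: "ennreal (\<Delta>/2 * (1 - q)) \<le> S" .
  show ?thesis
  proof (cases "S = \<infinity>")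
    case True thus ?thesis unfolding S_def[symmetric] by simp
  next
    case False
    define s where "s = enn2real S"
    have Ss: "S = ennreal s" "s \<ge> 0" unfolding s_def using False by (auto simp: less_top)
    have q1: "q \<le> 1" unfolding q_def by simp
    have r1: "\<Delta>/2 * p \<le> s" using h1 Ss \<Delta>0 p0 by (simp add: ennreal_le_iff)
    have r2: "\<Delta>/2 * (1 - q) \<le> s" using h2 Ss \<Delta>0 q1 by (simp add: ennreal_le_iff)
    have e0: "exp \<epsilon> > 0" by simp
    have "\<Delta>/2 * (1 - \<delta>) \<le> \<Delta>/2 * (1 - q) + exp \<epsilon> * (\<Delta>/2 * p)"
    proof -
      have "\<Delta>/2 * (1 - \<delta>) \<le> \<Delta>/2 * (1 - q + exp \<epsilon> * p)"
        using pq \<Delta>0 by (intro mult_left_mono) auto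
      thus ?thesis by (simp add: right_diff_distrib distrib_left mult.assoc mult.left_commute)
    qed
    also have "\<dots> \<le> s + exp \<epsilon> * s" using r1 r2 e0 by (intro add_mono mult_left_mono) auto
    finally have "\<Delta>/2 * (1 - \<delta>) \<le> (1 + exp \<epsilon>) * s" by (simp add: algebra_simps)
    hence "(1 - \<delta>) * \<Delta> \<le> s * (2 * (1 + exp \<epsilon>))"
      by (simp add: algebra_simps)
    hence "(1 - \<delta>) * \<Delta> / (2 * (1 + exp \<epsilon>)) \<le> s"
      using e0 by (subst pos_divide_le_eq) (auto simp: add_pos_pos)
    thus ?thesis using Ss unfolding S_def \<Delta>_def by (simp add: ennreal_leI)
  qed
qed

end
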